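(* Let $\mathcal C=(C_v)_{v\in V}$ be a univalent circle packing in $S^2$ indexed by a finite set $V$, and let $\mathcal V_{\mathcal C}=\{U\subset V:\bigcap_{v\in U}C_v\neq\emptyset\}$. Let $\varepsilon\in(0,1)$. Then there exists $\delta\in(0,1)$ such that for every $\alpha\in\mathbb R^3$ with $1-\delta<|\alpha|<1$ we have \[V\setminus V_\alpha^1\in\mathcal V_{\mathcal C},\qquad\text{where } V_\alpha^1=\{v\in V: f_\alpha(C_v)\subset B_\varepsilon(\alpha/|\alpha|)\}.\]
   Context: $S^2$ is the unit sphere in $\mathbb R^3$; $B_\varepsilon(x)$ is the open Euclidean ball of radius $\varepsilon$ about $x$. A spherical cap is a connected closed subset of $S^2$ whose boundary in $S^2$ is a circle obtained as the intersection of $S^2$ with an affine plane (neither empty nor a point); a circle packing is a family of spherical caps, univalent if their interiors are mutually disjoint. For $\beta\in S^2$ let $H_\beta=\{y:\langle y-\beta,\beta\rangle=0\}$, $\pi_\beta:H_\beta\cup\{\infty\}\to S^2$ the stereographic projection $\pi_\beta(y)=\frac{4}{|\beta+y|^2}(\beta+y)-\beta$, $\pi_\beta(\infty)=-\beta$; for $\lambda>0$ let $D^\lambda_\beta(y)=\beta+\lambda(y-\beta)$, $D^\lambda_\beta(\infty)=\infty$, and $g^\lambda_\beta=\pi_\beta^{-1}\circ D^\lambda_\beta\circ\pi_\beta:S^2\to S^2$. For $\alpha$ in the open unit ball define $f_\alpha=g^{1-|\alpha|}_{\alpha/|\alpha|}$ if $\alpha\neq0$ and $f_0=\mathrm{Id}_{S^2}$.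 *)

theory Defs
  imports "HOL-Analysis.Analysis"
begin

type_synonym R3 = "real ^ 3"

abbreviation S2 :: "R3 set" where "S2 \<equiv> sphere 0 1"

abbreviation S2top :: "R3 topology" where "S2top \<equiv> subtopology euclidean S2"

definition spherical_cap :: "R3 set \<Rightarrow> bool" where
  "spherical_cap C \<longleftrightarrow> C \<subseteq> S2 \<and> connected C \<and> closed C \<and>
     (\<exists>n c. n \<noteq> 0 \<and> S2top frontier_of C = S2 \<inter> {y. n \<bullet> y = c} \<and>
        (\<exists>x y. x \<noteq> y \<and> x \<in> S2 \<inter> {y. n \<bullet> y = c} \<and> y \<in> S2 \<inter> {y. n \<bullet> y = c}))"

definition univalent_circle_packing :: "'v set \<Rightarrow> ('v \<Rightarrow> R3 set) \<Rightarrow> bool" where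
  "univalent_circle_packing V C \<longleftrightarrow> (\<forall>v\<in>V. spherical_cap (C v)) \<and>
     (\<forall>u\<in>V. \<forall>v\<in>V. u \<noteq> v \<longrightarrow> (S2top interior_of C u) \<inter> (S2top interior_of C v) = {})"

definition nerve_sets :: "'v set \<Rightarrow> ('v \<Rightarrow> R3 set) \<Rightarrow> 'v set set" where
  "nerve_sets V C = {U. U \<subseteq> V \<and> (\<Inter>v\<in>U. C v) \<noteq> {}}"

text \<open>H_beta, with the point at infinity modelled by None.\<close>
definition tangent_plane :: "R3 \<Rightarrow> R3 set" where
  "tangent_plane \<beta> = {y. (y - \<beta>) \<bullet> \<beta> = 0}"

definition stereo_domain :: "R3 \<Rightarrow> R3 option set" where
  "stereo_domain \<beta> = insert None (Some ` tangent_plane \<beta>)"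

fun stereo :: "R3 \<Rightarrow> R3 option \<Rightarrow> R3" where
  "stereo \<beta> (Some y) = (4 / (norm (\<beta> + y))\<^sup>2) *\<^sub>R (\<beta> + y) - \<beta>"
| "stereo \<beta> None = - \<beta>"

fun dilate :: "R3 \<Rightarrow> real \<Rightarrow> R3 option \<Rightarrow> R3 option" where
  "dilate \<beta> lam (Some y) = Some (\<beta> + lam *\<^sub>R (y - \<beta>))"
| "dilate \<beta> lam None = None"

definition gmap :: "R3 \<Rightarrow> real \<Rightarrow> R3 \<Rightarrow> R3" where
  "gmap \<beta> lam x = stereo \<beta> (dilate \<beta> lam (inv_into (stereo_domain \<beta>) (stereo \<beta>) x))"

definition fmap :: "R3 \<Rightarrow> R3 \<Rightarrow> R3" where
  "fmap \<alpha> = (if \<alpha> = 0 then id else gmap (\<alpha> /\<^sub>R norm \<alpha>) (1 - norm \<alpha>))"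

end

theory Submission
  imports Defs
begin

lemma stereo_alg:
  fixes \<beta> w :: R3
  assumes nb: "norm \<beta> = 1" and tw: "(w - \<beta>) \<bullet> \<beta> = 0"
  shows "(norm (stereo \<beta> (Some w) + \<beta>))\<^sup>2 * (4 + (norm (w - \<beta>))\<^sup>2) = 16"
    and "(norm (stereo \<beta> (Some w) - \<beta>))\<^sup>2 \<le> (norm (w - \<beta>))\<^sup>2"
proof -
  define t where "t = w - \<beta>"
  define T where "T = (norm t)\<^sup>2"
  have tb: "t \<bullet> \<beta> = 0" using tw t_def by simp
  have bt: "\<beta> \<bullet> t = 0" using tb by (simp add: inner_commute)
  have bb: "\<beta> \<bullet> \<beta> = 1" using nb by (simp add: power2_norm_eq_inner[symmetric])
  have tt: "t \<bullet> t = T" by (simp add: T_def power2_norm_eq_inner)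
  have T0: "T \<ge> 0" by (simp add: T_def)
  have bw: "\<beta> + w = 2 *\<^sub>R \<beta> + t" by (simp add: t_def scaleR_2)
  have n2i: "(2 *\<^sub>R \<beta> + t) \<bullet> (2 *\<^sub>R \<beta> + t) = 4 + T"
    by (simp only: inner_add_left inner_add_right inner_scaleR_left inner_scaleR_right bb tt tb bt) simp
  have n2: "(norm (\<beta> + w))\<^sup>2 = 4 + T"
    by (metis power2_norm_eq_inner bw n2i)
  define c where "c = 4 / (4 + T)"
  have st: "stereo \<beta> (Some w) = c *\<^sub>R (2 *\<^sub>R \<beta> + t) - \<beta>"
    using n2 unfolding stereo.simps c_def bw by simp
  have e1: "stereo \<beta> (Some w) + \<beta> = c *\<^sub>R (2 *\<^sub>R \<beta> + t)" unfolding st by simp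
  have "(norm (stereo \<beta> (Some w) + \<beta>))\<^sup>2 = c^2 * (4 + T)"
    unfolding e1 power2_norm_eq_inner
    by (simp add: inner_add_left inner_add_right bb tt tb bt power2_eq_square algebra_simps)
  moreover have "(norm (w - \<beta>))\<^sup>2 = T" by (simp add: T_def t_def)
  moreover have "c^2 * (4 + T) * (4 + T) = 16"
    using T0 by (simp add: c_def power2_eq_square) (simp add: field_simps)
  ultimately show "(norm (stereo \<beta> (Some w) + \<beta>))\<^sup>2 * (4 + (norm (w - \<beta>))\<^sup>2) = 16"
    by simp
  have e2: "stereo \<beta> (Some w) - \<beta> = (2*c - 2) *\<^sub>R \<beta> + c *\<^sub>R t"
    unfolding st scaleR_add_right scaleR_diff_left scaleR_scaleR by (simp add: scaleR_2 mult.commute)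
  have "(norm (stereo \<beta> (Some w) - \<beta>))\<^sup>2 = (2*c-2)^2 + c^2 * T"
    unfolding e2 power2_norm_eq_inner
    by (simp add: inner_add_left inner_add_right bb tt tb bt power2_eq_square algebra_simps)
  also have "\<dots> = 4 * T / (4 + T)"
  proof -
    have D: "4 + T \<noteq> 0" using T0 by simp
    show ?thesis unfolding c_def using D by (simp add: power2_eq_square divide_simps) (simp add: algebra_simps)
  qed
  also have "\<dots> \<le> T" using T0 by (simp add: field_simps)
  finally show "(norm (stereo \<beta> (Some w) - \<beta>))\<^sup>2 \<le> (norm (w - \<beta>))\<^sup>2"
    by (simp add: T_def t_def)
qed

lemma stereo_surj:
  fixes \<beta> x :: R3
  assumes nb: "norm \<beta> = 1" and nx: "norm x = 1" and ne: "x \<noteq> - \<beta>"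
  shows "x \<in> stereo \<beta> ` stereo_domain \<beta>"
proof -
  have bb: "\<beta> \<bullet> \<beta> = 1" using nb by (simp add: power2_norm_eq_inner[symmetric])
  have xx: "x \<bullet> x = 1" using nx by (simp add: power2_norm_eq_inner[symmetric])
  define s where "s = 1 + x \<bullet> \<beta>"
  have "(norm (x + \<beta>))\<^sup>2 = 2 * s"
    unfolding power2_norm_eq_inner
    by (simp add: inner_add_left inner_add_right bb xx s_def inner_commute)
  moreover have "x + \<beta> \<noteq> 0" using ne by (metis add.commute add_eq_0_iff)
  ultimately have s0: "s > 0"
    by (metis mult_pos_pos zero_less_norm_iff zero_less_power zero_less_numeral
        linorder_not_le mult_le_0_iff not_numeral_le_zero order_le_less)
  have nxb: "(norm (x + \<beta>))\<^sup>2 = 2 * s"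
    unfolding power2_norm_eq_inner
    by (simp add: inner_add_left inner_add_right bb xx s_def inner_commute)
  define y where "y = - \<beta> + (2 / s) *\<^sub>R (x + \<beta>)"
  have by_: "\<beta> + y = (2 / s) *\<^sub>R (x + \<beta>)" by (simp add: y_def)
  have ym: "y - \<beta> = (2/s) *\<^sub>R (x + \<beta>) - 2 *\<^sub>R \<beta>"
    by (simp add: y_def scaleR_2)
  have "(y - \<beta>) \<bullet> \<beta> = (2/s) * (x \<bullet> \<beta> + 1) - 2"
    unfolding ym inner_diff_left inner_scaleR_left inner_add_left bb by simp
  also have "\<dots> = 0" using s0 by (simp add: s_def field_simps)
  finally have yt: "y \<in> tangent_plane \<beta>" by (simp add: tangent_plane_def)
  have "(norm (\<beta> + y))\<^sup>2 = (2/s)^2 * (2 * s)"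
    unfolding by_ using s0 by (simp add: power_divide power_mult_distrib nxb abs_of_pos)
  then have "(norm (\<beta> + y))\<^sup>2 = 8 / s" using s0 by (simp add: power2_eq_square field_simps)
  then have "4 / (norm (\<beta> + y))\<^sup>2 = s / 2" by simp
  then have "stereo \<beta> (Some y) = x"
    using s0 by (simp add: by_)
  then show ?thesis using yt unfolding stereo_domain_def by (metis image_eqI image_insert insertI2)
qed

lemma key:
  fixes \<beta> x :: R3
  assumes nb: "norm \<beta> = 1" and nx: "norm x = 1" and lam: "0 < lam"
    and eta: "0 < \<eta>" and far: "norm (x + \<beta>) \<ge> \<eta>" and small: "4 * lam < \<epsilon> * \<eta>"
  shows "norm (gmap \<beta> lam x - \<beta>) < \<epsilon>"
proof -
  have ne: "x \<noteq> - \<beta>" using far eta by auto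
  define z where "z = inv_into (stereo_domain \<beta>) (stereo \<beta>) x"
  have surj: "x \<in> stereo \<beta> ` stereo_domain \<beta>" using stereo_surj[OF nb nx ne] .
  have zin: "z \<in> stereo_domain \<beta>" unfolding z_def by (rule inv_into_into[OF surj])
  have zx: "stereo \<beta> z = x" unfolding z_def by (rule f_inv_into_f[OF surj])
  obtain y where zy: "z = Some y" and yt: "y \<in> tangent_plane \<beta>"
    using zin zx ne unfolding stereo_domain_def by auto
  have ty: "(y - \<beta>) \<bullet> \<beta> = 0" using yt by (simp add: tangent_plane_def)
  define T where "T = (norm (y - \<beta>))\<^sup>2"
  have T0: "T \<ge> 0" by (simp add: T_def)
  have sx: "stereo \<beta> (Some y) = x" using zx zy by simp
  have "(norm (x + \<beta>))\<^sup>2 * (4 + T) = 16"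
    using stereo_alg(1)[OF nb ty] unfolding sx T_def .
  moreover have "\<eta>^2 \<le> (norm (x + \<beta>))\<^sup>2" using far eta by (simp add: power_mono)
  ultimately have "\<eta>^2 * (4 + T) \<le> 16" using T0
    by (metis add_nonneg_nonneg mult_right_mono zero_le_numeral)
  then have "\<eta>^2 * T + 4 * \<eta>^2 \<le> 16" by (simp add: algebra_simps)
  then have eT: "\<eta>^2 * T \<le> 16" using zero_le_power2[of \<eta>] by linarith
  define w where "w = \<beta> + lam *\<^sub>R (y - \<beta>)"
  have tw: "(w - \<beta>) \<bullet> \<beta> = 0" using ty by (simp add: w_def)
  have g: "gmap \<beta> lam x = stereo \<beta> (Some w)"
    unfolding gmap_def z_def[symmetric] zy by (simp add: w_def)
  have "(norm (gmap \<beta> lam x - \<beta>))\<^sup>2 \<le> lam^2 * T"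
    using stereo_alg(2)[OF nb tw] lam unfolding g
    by (simp add: w_def T_def power_mult_distrib)
  moreover have "lam^2 * T < \<epsilon>^2"
  proof -
    have "(lam^2 * T) * \<eta>^2 \<le> lam^2 * 16" using eT
      by (metis mult.commute mult.left_commute mult_left_mono zero_le_power2)
    also have "\<dots> = (4*lam)^2" by (simp add: power2_eq_square)
    also have "\<dots> < (\<epsilon> * \<eta>)^2" using small lam
      by (intro power_strict_mono) auto
    finally have "(lam^2 * T) * \<eta>^2 < \<epsilon>^2 * \<eta>^2" by (simp add: power_mult_distrib)
    then show ?thesis using eta by simp
  qed
  ultimately have "(norm (gmap \<beta> lam x - \<beta>))\<^sup>2 < \<epsilon>^2" by linarith
  moreover have "\<epsilon> > 0"
  proof -
    have "0 < \<epsilon> * \<eta>" using small lam by linarith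
    then show ?thesis using zero_less_mult_pos2 eta by blast
  qed
  ultimately show ?thesis by (smt (verit) power_mono norm_ge_zero)
qed

lemma nerve_one:
  fixes U :: "'v set" and C :: "'v \<Rightarrow> R3 set"
  assumes fin: "finite U" and cl: "\<forall>v\<in>U. closed (C v) \<and> C v \<noteq> {}"
  shows "\<exists>\<eta>>0. \<forall>p\<in>S2. (\<forall>v\<in>U. \<exists>x\<in>C v. dist x p < \<eta>) \<longrightarrow> (\<Inter>v\<in>U. C v) \<noteq> {}"
proof (cases "(\<Inter>v\<in>U. C v) = {}")
  case False
  then show ?thesis by (intro exI[of _ 1]) auto
next
  case True
  then have Une: "U \<noteq> {}" by auto
  define F where "F p = (\<Sum>v\<in>U. infdist p (C v))" for p :: R3
  have cF: "continuous_on S2 F" unfolding F_def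
    by (intro continuous_on_sum continuous_on_infdist continuous_on_id)
  obtain p0 where p0: "p0 \<in> S2" and pmin: "\<forall>y\<in>S2. F p0 \<le> F y"
    using continuous_attains_inf[OF compact_sphere _ cF] by auto
  have F0: "F p0 \<ge> 0" unfolding F_def by (intro sum_nonneg) (simp add: infdist_nonneg)
  have "F p0 \<noteq> 0"
  proof
    assume Fz: "F p0 = 0"
    have iz: "\<forall>v\<in>U. infdist p0 (C v) = 0"
      using sum_nonneg_eq_0_iff[OF fin, of "\<lambda>v. infdist p0 (C v)"] Fz
      by (simp add: F_def infdist_nonneg)
    have "\<forall>v\<in>U. p0 \<in> C v"
    proof
      fix v assume vU: "v \<in> U"
      then have "closed (C v)" "C v \<noteq> {}" using cl by auto
      then show "p0 \<in> C v" using in_closed_iff_infdist_zero[of "C v" p0] iz vU by simp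
    qed
    then show False using True by auto
  qed
  then have mpos: "F p0 > 0" using F0 by simp
  have cpos: "real (card U) > 0" using Une fin by (simp add: card_gt_0_iff)
  show ?thesis
  proof (intro exI[of _ "F p0 / card U"] conjI ballI impI)
    show "F p0 / card U > 0" using mpos cpos by simp
    fix p assume pS: "p \<in> S2" and H: "\<forall>v\<in>U. \<exists>x\<in>C v. dist x p < F p0 / card U"
    have Fp: "F p = (\<Sum>v\<in>U. infdist p (C v))" by (rule F_def)
    have "F p < (\<Sum>v\<in>U. F p0 / card U)" unfolding Fp
    proof (rule sum_strict_mono[OF fin Une])
      fix v assume "v \<in> U"
      then obtain x where "x \<in> C v" "dist x p < F p0 / card U" using H by blast
      then show "infdist p (C v) < F p0 / card U"
        using infdist_le[of x "C v" p] by (simp add: dist_commute)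
    qed
    also have "\<dots> = F p0" using cpos by simp
    finally have "F p < F p0" .
    then show "(\<Inter>v\<in>U. C v) \<noteq> {}" using pmin pS by (meson not_le)
  qed
qed

lemma nerve_eta:
  fixes V :: "'v set" and C :: "'v \<Rightarrow> R3 set"
  assumes fin: "finite V" and cl: "\<forall>v\<in>V. closed (C v) \<and> C v \<noteq> {}"
  shows "\<exists>\<eta>>0. \<forall>U\<in>Pow V. \<forall>p\<in>S2. (\<forall>v\<in>U. \<exists>x\<in>C v. dist x p < \<eta>) \<longrightarrow> (\<Inter>v\<in>U. C v) \<noteq> {}"
proof -
  have "\<forall>U\<in>Pow V. \<exists>\<eta>>0. \<forall>p\<in>S2. (\<forall>v\<in>U. \<exists>x\<in>C v. dist x p < \<eta>) \<longrightarrow> (\<Inter>v\<in>U. C v) \<noteq> {}"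
  proof
    fix U assume "U \<in> Pow V"
    then have "finite U" "\<forall>v\<in>U. closed (C v) \<and> C v \<noteq> {}" using fin cl finite_subset by auto
    then show "\<exists>\<eta>>0. \<forall>p\<in>S2. (\<forall>v\<in>U. \<exists>x\<in>C v. dist x p < \<eta>) \<longrightarrow> (\<Inter>v\<in>U. C v) \<noteq> {}"
      by (rule nerve_one)
  qed
  from bchoice[OF this] obtain e where e: "\<forall>U\<in>Pow V. 0 < e U \<and> (\<forall>p\<in>S2. (\<forall>v\<in>U. \<exists>x\<in>C v. dist x p < e U) \<longrightarrow> (\<Inter>v\<in>U. C v) \<noteq> {})"
    by blast
  define \<eta> where "\<eta> = Min (e ` Pow V)"
  have fP: "finite (e ` Pow V)" using fin by simp
  have neP: "e ` Pow V \<noteq> {}" by auto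
  have "\<eta> > 0" unfolding \<eta>_def using e fP neP by (subst Min_gr_iff) auto
  moreover have "\<forall>U\<in>Pow V. \<eta> \<le> e U" unfolding \<eta>_def using fP by auto
  ultimately show ?thesis
  proof (intro exI[of _ \<eta>] conjI ballI impI)
    fix U p assume UP: "U \<in> Pow V" and pS: "p \<in> S2"
      and hy: "\<forall>v\<in>U. \<exists>x\<in>C v. dist x p < \<eta>"
    have le: "\<eta> \<le> e U" using UP \<open>\<forall>U\<in>Pow V. \<eta> \<le> e U\<close> by blast
    have "\<forall>v\<in>U. \<exists>x\<in>C v. dist x p < e U"
    proof
      fix v assume "v \<in> U"
      then obtain x where "x \<in> C v" "dist x p < \<eta>" using hy by blast
      then show "\<exists>x\<in>C v. dist x p < e U" using le by force
    qed
    moreover have "\<forall>p\<in>S2. (\<forall>v\<in>U. \<exists>x\<in>C v. dist x p < e U) \<longrightarrow> (\<Inter>v\<in>U. C v) \<noteq> {}"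
      using e UP by blast
    ultimately show "(\<Inter>v\<in>U. C v) \<noteq> {}" using pS by blast
  qed
qed

theorem lemma3p8:
  fixes V :: "'v set" and C :: "'v \<Rightarrow> R3 set" and \<epsilon> :: real
  assumes "finite V" and "univalent_circle_packing V C"
    and "0 < \<epsilon>" and "\<epsilon> < 1"
  shows "\<exists>\<delta>. 0 < \<delta> \<and> \<delta> < 1 \<and>
    (\<forall>\<alpha> :: R3. 1 - \<delta> < norm \<alpha> \<and> norm \<alpha> < 1 \<longrightarrow>
       V - {v \<in> V. fmap \<alpha> ` C v \<subseteq> ball (\<alpha> /\<^sub>R norm \<alpha>) \<epsilon>} \<in> nerve_sets V C)"
proof -
  have caps: "\<forall>v\<in>V. spherical_cap (C v)" using assms(2) by (simp add: univalent_circle_packing_def)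
  have cl: "\<forall>v\<in>V. closed (C v) \<and> C v \<noteq> {}"
  proof
    fix v assume "v \<in> V"
    then have sc: "spherical_cap (C v)" using caps by blast
    then have "closed (C v)" by (simp add: spherical_cap_def)
    moreover have "C v \<noteq> {}"
    proof
      assume "C v = {}"
      then show False using sc unfolding spherical_cap_def by auto
    qed
    ultimately show "closed (C v) \<and> C v \<noteq> {}" by simp
  qed
  have sub: "\<forall>v\<in>V. C v \<subseteq> S2" using caps by (simp add: spherical_cap_def)
  obtain \<eta> where eta: "\<eta> > 0" and
    H: "\<forall>U\<in>Pow V. \<forall>p\<in>S2. (\<forall>v\<in>U. \<exists>x\<in>C v. dist x p < \<eta>) \<longrightarrow> (\<Inter>v\<in>U. C v) \<noteq> {}"
    using nerve_eta[OF assms(1) cl] by blast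
  define \<delta> where "\<delta> = min (1/2) (\<epsilon> * \<eta> / 8)"
  have d0: "0 < \<delta>" using eta assms(3) by (simp add: \<delta>_def)
  have d1: "\<delta> < 1" by (simp add: \<delta>_def)
  show ?thesis
  proof (intro exI[of _ \<delta>] conjI d0 d1 allI impI)
    fix \<alpha> :: R3 assume a: "1 - \<delta> < norm \<alpha> \<and> norm \<alpha> < 1"
    define \<beta> where "\<beta> = \<alpha> /\<^sub>R norm \<alpha>"
    define lam where "lam = 1 - norm \<alpha>"
    have an: "\<alpha> \<noteq> 0" using a d1 by auto
    have nb: "norm \<beta> = 1" using an by (simp add: \<beta>_def)
    have f: "fmap \<alpha> = gmap \<beta> lam" using an by (simp add: fmap_def \<beta>_def lam_def)
    have lam0: "0 < lam" using a by (simp add: lam_def)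
    have small: "4 * lam < \<epsilon> * \<eta>"
    proof -
      have "\<delta> \<le> \<epsilon> * \<eta> / 8" by (simp add: \<delta>_def)
      then have "lam < \<epsilon> * \<eta> / 8" using a unfolding lam_def by linarith
      moreover have "\<epsilon> * \<eta> > 0" using eta assms(3) by simp
      ultimately show ?thesis by linarith
    qed
    define U where "U = V - {v \<in> V. fmap \<alpha> ` C v \<subseteq> ball (\<alpha> /\<^sub>R norm \<alpha>) \<epsilon>}"
    have UV: "U \<in> Pow V" by (auto simp: U_def)
    have pS: "- \<beta> \<in> S2" using nb by simp
    have "\<forall>v\<in>U. \<exists>x\<in>C v. dist x (- \<beta>) < \<eta>"
    proof
      fix v assume vU: "v \<in> U"
      then have vV: "v \<in> V" and nsub: "\<not> (gmap \<beta> lam ` C v \<subseteq> ball \<beta> \<epsilon>)"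
        by (auto simp: U_def f \<beta>_def)
      then obtain x where xC: "x \<in> C v" and xn: "gmap \<beta> lam x \<notin> ball \<beta> \<epsilon>" by blast
      have "x \<in> S2" using sub vV xC by blast
      then have nx: "norm x = 1" by simp
      show "\<exists>x\<in>C v. dist x (- \<beta>) < \<eta>"
      proof (rule ccontr)
        assume "\<not> ?thesis"
        then have "dist x (- \<beta>) \<ge> \<eta>" using xC by (meson not_le)
        then have far: "norm (x + \<beta>) \<ge> \<eta>" by (simp add: dist_norm)
        have "norm (gmap \<beta> lam x - \<beta>) < \<epsilon>" by (rule key[OF nb nx lam0 eta far small])
        then have "gmap \<beta> lam x \<in> ball \<beta> \<epsilon>" by (simp add: dist_norm norm_minus_commute)
        then show False using xn by blast
      qed
    qed
    moreover have "\<forall>p\<in>S2. (\<forall>v\<in>U. \<exists>x\<in>C v. dist x p < \<eta>) \<longrightarrow> (\<Inter>v\<in>U. C v) \<noteq> {}"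
      using H UV by blast
    ultimately have "(\<Inter>v\<in>U. C v) \<noteq> {}" using pS by blast
    then show "V - {v \<in> V. fmap \<alpha> ` C v \<subseteq> ball (\<alpha> /\<^sub>R norm \<alpha>) \<epsilon>} \<in> nerve_sets V C"
      using UV unfolding U_def[symmetric] nerve_sets_def by auto
  qed
qed

end
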